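(* Let $\kappa>0$, let $V:[0,1]\to\mathbb R$ be smooth, and let $\theta:[0,1]\to\mathbb R$ be smooth with $\theta>0$ on $(0,1)$, $\theta(0)=\theta(1)=0$, $\theta'(0)>0$, $\theta'(1)<0$. Let $(\lambda,w,z)$ be the continuous characteristic triple. Then $$w(x)z(x)=\frac1C\,\frac{w^2(x)e^{-2V(x)/\kappa}}{\theta(x)},\qquad x\in(0,1),$$ where $C=\int_0^1\frac{w^2(x)e^{-2V(x)/\kappa}}{\theta(x)}\,dx>0$.
   Context: The continuous characteristic triple $(\lambda,w,z)$ consists of the principal eigenvalue $\lambda$ and positive (on $(0,1)$) principal eigenfunctions of the problems $$-\tfrac\kappa2(\theta z)''-(\theta zV')'=\lambda z\ \text{on }(0,1),\quad \lim_{x\to0,1}\theta(x)z(x)=0,$$ $$-\tfrac\kappa2\theta w''+\theta V'w'=\lambda w\ \text{on }(0,1),\quad w(0)=w(1)=0,$$ normalised by $\int_0^1z\,dx=1$ and $\int_0^1wz\,dx=1$ (these principal eigenpairs exist and are unique up to normalisation). *)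

theory Defs
  imports "HOL-Analysis.Analysis"
begin

definition smooth_on_unit :: "(real \<Rightarrow> real) \<Rightarrow> bool" where
  "smooth_on_unit f \<longleftrightarrow>
     (\<exists>D :: nat \<Rightarrow> real \<Rightarrow> real. D 0 = f \<and>
        (\<forall>n. \<forall>x\<in>{0..1}. (D n has_real_derivative D (Suc n) x) (at x within {0..1})))"

definition twice_diff_open_unit :: "(real \<Rightarrow> real) \<Rightarrow> bool" where
  "twice_diff_open_unit f \<longleftrightarrow>
     (\<forall>x\<in>{0<..<1}. f differentiable at x \<and> deriv f differentiable at x)"

definition char_triple ::
  "real \<Rightarrow> (real \<Rightarrow> real) \<Rightarrow> (real \<Rightarrow> real) \<Rightarrow> real \<Rightarrow> (real \<Rightarrow> real) \<Rightarrow> (real \<Rightarrow> real) \<Rightarrow> bool"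
where
  "char_triple \<kappa> V \<theta> lam w z \<longleftrightarrow>
     \<comment> \<open>backward problem for w\<close>
     continuous_on {0..1} w \<and> twice_diff_open_unit w \<and>
     (\<forall>x\<in>{0<..<1}. w x > 0) \<and> w 0 = 0 \<and> w 1 = 0 \<and>
     (\<forall>x\<in>{0<..<1}.
        - (\<kappa> / 2) * \<theta> x * deriv (deriv w) x + \<theta> x * deriv V x * deriv w x = lam * w x) \<and>
     \<comment> \<open>forward (adjoint) problem for z\<close>
     twice_diff_open_unit (\<lambda>x. \<theta> x * z x) \<and>
     (\<forall>x\<in>{0<..<1}. (\<lambda>y. \<theta> y * z y * deriv V y) differentiable at x) \<and>
     (\<forall>x\<in>{0<..<1}. z x > 0) \<and>
     (\<forall>x\<in>{0<..<1}.
        - (\<kappa> / 2) * deriv (deriv (\<lambda>y. \<theta> y * z y)) x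
        - deriv (\<lambda>y. \<theta> y * z y * deriv V y) x = lam * z x) \<and>
     ((\<lambda>x. \<theta> x * z x) \<longlongrightarrow> 0) (at_right 0) \<and>
     ((\<lambda>x. \<theta> x * z x) \<longlongrightarrow> 0) (at_left 1) \<and>
     \<comment> \<open>normalisations\<close>
     (z has_integral 1) {0..1} \<and>
     ((\<lambda>x. w x * z x) has_integral 1) {0..1}"

end

theory Submission
  imports Defs
begin


lemma neg_ln_le: assumes "(0::real) < x" shows "- ln x \<le> 2 / sqrt x"
proof -
  have sx: "sqrt x > 0" using assms by simp
  have e: "ln x = 2 * ln (sqrt x)" using assms by (simp add: ln_sqrt)
  have "ln (1 / sqrt x) \<le> 1 / sqrt x - 1" using sx by (intro ln_le_minus_one) simp
  moreover have "ln (1 / sqrt x) = - ln (sqrt x)" using sx by (simp add: ln_div)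
  ultimately show ?thesis using e by simp
qed

lemma bound_lemma:
  fixes f g m :: "real \<Rightarrow> real" and b K \<mu> :: real
  assumes b: "0 < b" "b \<le> 1" and K: "K \<ge> 0" and mu: "\<mu> > 0"
  and fc: "continuous_on {0..b} f" and f0: "f 0 = 0"
  and fd: "\<And>x. x \<in> {0<..b} \<Longrightarrow> (f has_real_derivative g x / m x) (at x)"
  and gd: "\<And>x. x \<in> {0<..b} \<Longrightarrow> \<exists>d. (g has_real_derivative d) (at x) \<and> \<bar>d\<bar> \<le> K * \<bar>f x\<bar> / x"
  and mb: "\<And>x. x \<in> {0<..b} \<Longrightarrow> m x \<ge> \<mu>"
  shows "\<exists>B. \<forall>x\<in>{0<..b}. \<bar>g x\<bar> \<le> B"
proof -
  have "bounded (f ` {0..b})" by (intro compact_imp_bounded compact_continuous_image fc compact_Icc)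
  then obtain F where F': "\<forall>x\<in>{0..b}. \<bar>f x\<bar> \<le> F" by (auto simp: bounded_iff)
  then have F: "\<And>x. x \<in> {0..b} \<Longrightarrow> \<bar>f x\<bar> \<le> F" by blast
  have F0: "F \<ge> 0" using F[of 0] b by auto
  define G0 where "G0 = \<bar>g b\<bar>"
  have step2: "\<bar>g x\<bar> \<le> G0 + 2 * K * F / sqrt x" if x: "x \<in> {0<..b}" for x
  proof -
    have A: "g x + K * F * ln x \<le> g b + K * F * ln b"
    proof (rule DERIV_nonneg_imp_nondecreasing[where f="\<lambda>y. g y + K * F * ln y"])
      show "x \<le> b" using x by simp
      fix y assume y: "x \<le> y" "y \<le> b"
      then have y0: "y > 0" using x by simp
      obtain d where d: "(g has_real_derivative d) (at y)" "\<bar>d\<bar> \<le> K * \<bar>f y\<bar> / y"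
        using gd[of y] y y0 by auto
      have "K * \<bar>f y\<bar> / y \<le> K * F / y"
        using F[of y] y y0 K by (intro divide_right_mono mult_left_mono) auto
      then have "d + K * F * (1 / y) \<ge> 0" using d(2) by simp
      moreover have "((\<lambda>y. g y + K * F * ln y) has_real_derivative d + K * F * (1 / y)) (at y)"
        using d(1) y0 by (auto intro!: derivative_eq_intros)
      ultimately show "\<exists>D. ((\<lambda>y. g y + K * F * ln y) has_real_derivative D) (at y) \<and> D \<ge> 0" by blast
    qed
    have B: "- g x + K * F * ln x \<le> - g b + K * F * ln b"
    proof (rule DERIV_nonneg_imp_nondecreasing[where f="\<lambda>y. - g y + K * F * ln y"])
      show "x \<le> b" using x by simp
      fix y assume y: "x \<le> y" "y \<le> b"
      then have y0: "y > 0" using x by simp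
      obtain d where d: "(g has_real_derivative d) (at y)" "\<bar>d\<bar> \<le> K * \<bar>f y\<bar> / y"
        using gd[of y] y y0 by auto
      have "K * \<bar>f y\<bar> / y \<le> K * F / y"
        using F[of y] y y0 K by (intro divide_right_mono mult_left_mono) auto
      then have "- d + K * F * (1 / y) \<ge> 0" using d(2) by simp
      moreover have "((\<lambda>y. - g y + K * F * ln y) has_real_derivative - d + K * F * (1 / y)) (at y)"
        using d(1) y0 by (auto intro!: derivative_eq_intros)
      ultimately show "\<exists>D. ((\<lambda>y. - g y + K * F * ln y) has_real_derivative D) (at y) \<and> D \<ge> 0" by blast
    qed
    have lnb: "ln b \<le> 0" using b by simp
    have "- ln x \<le> 2 / sqrt x" using x by (intro neg_ln_le) simp
    then have "K * F * (- ln x) \<le> K * F * (2 / sqrt x)" using K F0 by (intro mult_left_mono) auto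
    moreover have "K * F * ln b \<le> 0" using K F0 lnb by (simp add: mult_nonneg_nonpos)
    moreover have "K * F * (2 / sqrt x) = 2 * K * F / sqrt x" by simp
    ultimately show ?thesis using A B abs_ge_self[of "g b"] abs_ge_minus_self[of "g b"]
      unfolding G0_def abs_le_iff by linarith
  qed
  define P where "P = G0 / \<mu>"
  define Q where "Q = 2 * K * F / \<mu>"
  have G00: "G0 \<ge> 0" unfolding G0_def by simp
  have P0: "P \<ge> 0" and Q0: "Q \<ge> 0" unfolding P_def Q_def using G00 mu K F0 by auto
  have fder: "\<bar>g y / m y\<bar> \<le> P + Q / sqrt y" if y: "y \<in> {0<..b}" for y
  proof -
    have my: "m y \<ge> \<mu>" using mb y by simp
    have "\<bar>g y / m y\<bar> = \<bar>g y\<bar> / m y" using my mu by simp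
    also have "\<dots> \<le> \<bar>g y\<bar> / \<mu>" using my mu by (intro divide_left_mono) auto
    also have "\<dots> \<le> (G0 + 2 * K * F / sqrt y) / \<mu>" using step2[OF y] mu by (intro divide_right_mono) auto
    also have "\<dots> = P + Q / sqrt y" unfolding P_def Q_def using mu y by (simp add: field_simps)
    finally show ?thesis .
  qed
  define R where "R = P + 2 * Q"
  have step4: "\<bar>f t\<bar> \<le> R * sqrt t" if t: "t \<in> {0<..b}" for t
  proof -
    have ct: "continuous_on {0..t} f" using t by (intro continuous_on_subset[OF fc]) auto
    have "P * 0 + 2 * Q * sqrt 0 - f 0 \<le> P * t + 2 * Q * sqrt t - f t"
    proof (rule DERIV_nonneg_imp_increasing_open[where f="\<lambda>y. P * y + 2 * Q * sqrt y - f y"])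
      show "0 \<le> t" using t by simp
      show "continuous_on {0..t} (\<lambda>y. P * y + 2 * Q * sqrt y - f y)"
        using ct by (intro continuous_intros)
      fix y assume y: "0 < y" "y < t"
      then have yb: "y \<in> {0<..b}" using t by simp
      have "((\<lambda>y. P * y + 2 * Q * sqrt y - f y) has_real_derivative P + 2 * Q * (inverse (sqrt y) / 2) - g y / m y) (at y)"
        using fd[OF yb] y by (auto intro!: derivative_eq_intros)
      moreover have "P + 2 * Q * (inverse (sqrt y) / 2) - g y / m y \<ge> 0"
      proof -
        have "2 * Q * (inverse (sqrt y) / 2) = Q / sqrt y" by (simp add: field_simps)
        then show ?thesis using abs_le_D1[OF fder[OF yb]] abs_le_D2[OF fder[OF yb]] by linarith
      qed
      ultimately show "\<exists>D. ((\<lambda>y. P * y + 2 * Q * sqrt y - f y) has_real_derivative D) (at y) \<and> D \<ge> 0" by blast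
    qed
    moreover have "P * 0 + 2 * Q * sqrt 0 + f 0 \<le> P * t + 2 * Q * sqrt t + f t"
    proof (rule DERIV_nonneg_imp_increasing_open[where f="\<lambda>y. P * y + 2 * Q * sqrt y + f y"])
      show "0 \<le> t" using t by simp
      show "continuous_on {0..t} (\<lambda>y. P * y + 2 * Q * sqrt y + f y)"
        using ct by (intro continuous_intros)
      fix y assume y: "0 < y" "y < t"
      then have yb: "y \<in> {0<..b}" using t by simp
      have "((\<lambda>y. P * y + 2 * Q * sqrt y + f y) has_real_derivative P + 2 * Q * (inverse (sqrt y) / 2) + g y / m y) (at y)"
        using fd[OF yb] y by (auto intro!: derivative_eq_intros)
      moreover have "P + 2 * Q * (inverse (sqrt y) / 2) + g y / m y \<ge> 0"
      proof -
        have "2 * Q * (inverse (sqrt y) / 2) = Q / sqrt y" by (simp add: field_simps)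
        then show ?thesis using abs_le_D1[OF fder[OF yb]] abs_le_D2[OF fder[OF yb]] by linarith
      qed
      ultimately show "\<exists>D. ((\<lambda>y. P * y + 2 * Q * sqrt y + f y) has_real_derivative D) (at y) \<and> D \<ge> 0" by blast
    qed
    ultimately have "\<bar>f t\<bar> \<le> P * t + 2 * Q * sqrt t" using f0 by (simp add: abs_le_iff)
    moreover have "t \<le> sqrt t" using t b
      by (intro real_le_rsqrt) (simp add: power2_eq_square mult_left_le)
    then have "P * t \<le> P * sqrt t" using P0 by (intro mult_left_mono)
    ultimately show ?thesis unfolding R_def by (simp add: algebra_simps)
  qed
  have R0: "R \<ge> 0" unfolding R_def using P0 Q0 by simp
  have "\<bar>g x\<bar> \<le> G0 + 2 * K * R * sqrt b" if x: "x \<in> {0<..b}" for x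
  proof -
    have gbd: "\<exists>D. ((\<lambda>y. s * g y + 2 * K * R * sqrt y) has_real_derivative D) (at y) \<and> D \<ge> 0"
      if s: "\<bar>s\<bar> = 1" and y: "x \<le> y" "y \<le> b" for s y
    proof -
      have y0: "y > 0" and yb: "y \<in> {0<..b}" using x y by auto
      obtain d where d: "(g has_real_derivative d) (at y)" "\<bar>d\<bar> \<le> K * \<bar>f y\<bar> / y"
        using gd[OF yb] by auto
      have "K * \<bar>f y\<bar> / y \<le> K * (R * sqrt y) / y"
        using step4[OF yb] y0 K by (intro divide_right_mono mult_left_mono) auto
      also have "\<dots> = K * R / sqrt y" using y0 by (simp add: field_simps)
      finally have dd: "\<bar>d\<bar> \<le> K * R / sqrt y" using d(2) by linarith
      have "\<bar>s * d\<bar> \<le> K * R / sqrt y" using dd s by (simp add: abs_mult)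
      then have "s * d + 2 * K * R * (inverse (sqrt y) / 2) \<ge> 0"
        by (simp add: field_simps abs_le_iff)
      moreover have "((\<lambda>y. s * g y + 2 * K * R * sqrt y) has_real_derivative s * d + 2 * K * R * (inverse (sqrt y) / 2)) (at y)"
        using d(1) y0 by (auto intro!: derivative_eq_intros)
      ultimately show ?thesis by blast
    qed
    have A: "1 * g x + 2 * K * R * sqrt x \<le> 1 * g b + 2 * K * R * sqrt b"
      using x by (intro DERIV_nonneg_imp_nondecreasing[where f="\<lambda>y. 1 * g y + 2 * K * R * sqrt y"] gbd) auto
    have B: "(-1) * g x + 2 * K * R * sqrt x \<le> (-1) * g b + 2 * K * R * sqrt b"
      using x by (intro DERIV_nonneg_imp_nondecreasing[where f="\<lambda>y. (-1) * g y + 2 * K * R * sqrt y"] gbd) auto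
    have "2 * K * R * sqrt x \<ge> 0" using K R0 x by simp
    then show ?thesis using A B abs_ge_self[of "g b"] abs_ge_minus_self[of "g b"]
      unfolding G0_def abs_le_iff by linarith
  qed
  then show ?thesis by blast
qed

lemma gd_helper:
  fixes d A c0 x th mx M f :: real
  assumes c0: "c0 > 0" and x: "x > 0" and th: "th \<ge> c0 * x" and e: "d * th = - A * mx * f"
    and m: "0 \<le> mx" "mx \<le> M"
  shows "\<bar>d\<bar> \<le> (\<bar>A\<bar> * M / c0) * \<bar>f\<bar> / x"
proof -
  have "\<bar>d\<bar> * th = \<bar>A\<bar> * mx * \<bar>f\<bar>"
    using e th c0 x m by (metis abs_minus_cancel abs_mult abs_of_nonneg mult_pos_pos order_less_le_trans less_imp_le)
  also have "\<dots> \<le> \<bar>A\<bar> * M * \<bar>f\<bar>" using m by (intro mult_right_mono mult_left_mono) auto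
  finally have 1: "\<bar>d\<bar> * th \<le> \<bar>A\<bar> * M * \<bar>f\<bar>" .
  have "\<bar>d\<bar> * (c0 * x) \<le> \<bar>d\<bar> * th" using th by (intro mult_left_mono) auto
  with 1 have "\<bar>d\<bar> * (c0 * x) \<le> \<bar>A\<bar> * M * \<bar>f\<bar>" by linarith
  then show ?thesis using c0 x by (simp add: field_simps)
qed
lemma alg_w:
  fixes \<kappa> th w2 w1 V1 lam wx mx :: real
  assumes k: "\<kappa> > 0" and e: "-(\<kappa>/2)*th*w2 + th*V1*w1 = lam*wx"
  shows "((- 2 * V1 / \<kappa>) * mx * w1 + w2 * mx) * th = - (2 * lam / \<kappa>) * mx * wx"
proof -
  have e1: "th * w2 = 2 / \<kappa> * (th * V1 * w1 - lam * wx)" using e k by (simp add: field_simps)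
  have "((- 2 * V1 / \<kappa>) * mx * w1 + w2 * mx) * th = mx * (th * w2) - 2 / \<kappa> * mx * th * V1 * w1"
    by (simp add: field_simps)
  also have "\<dots> = - (2 * lam / \<kappa>) * mx * wx" unfolding e1 using k by (simp add: field_simps)
  finally show ?thesis .
qed

lemma alg_v:
  fixes \<kappa> u2 p1 lam zx ux th mx vvx :: real
  assumes k: "\<kappa> > 0" and e: "-(\<kappa>/2)*u2 - p1 = lam*zx" and "ux = th*zx" and "ux = mx * vvx"
  shows "(u2 + 2 / \<kappa> * p1) * th = - (2 * lam / \<kappa>) * mx * vvx"
proof -
  have e2a: "\<kappa> / 2 * u2 = - (lam * zx + p1)" using e by linarith
  have e2b: "u2 = 2 / \<kappa> * (- (lam * zx + p1))" using e2a k by (simp add: field_simps)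
  have e1: "u2 + 2 / \<kappa> * p1 = - (2 / \<kappa>) * lam * zx" unfolding e2b by (simp add: algebra_simps)
  show ?thesis unfolding e1 using assms(3,4) by (simp add: field_simps)
qed

lemma alg_W:
  fixes \<kappa> th w2 w1 V1 lam wx u2 u1 ux p1 zx gvvx :: real
  assumes k: "\<kappa> > 0" and ew: "-(\<kappa>/2)*th*w2 + th*V1*w1 = lam*wx"
    and ez: "-(\<kappa>/2)*u2 - p1 = lam*zx" and uz: "ux = th*zx" and g: "gvvx = u1 + 2 / \<kappa> * (ux * V1)"
  shows "u1 * w1 + w2 * ux - (w1 * gvvx + (u2 + 2 / \<kappa> * p1) * wx) = 0"
proof -
  have e1: "th * w2 = 2 / \<kappa> * (th * V1 * w1 - lam * wx)" using ew k by (simp add: field_simps)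
  have e2a: "\<kappa> / 2 * u2 = - (lam * zx + p1)" using ez by linarith
  have e2b: "u2 = 2 / \<kappa> * (- (lam * zx + p1))" using e2a k by (simp add: field_simps)
  have e2: "u2 + 2 / \<kappa> * p1 = - (2 / \<kappa>) * lam * zx" unfolding e2b by (simp add: algebra_simps)
  have "w2 * ux = zx * (th * w2)" using uz by simp
  also have "\<dots> = 2 / \<kappa> * (ux * V1 * w1 - lam * zx * wx)" unfolding e1 using uz by (simp add: algebra_simps)
  finally have e3: "w2 * ux = 2 / \<kappa> * (ux * V1 * w1 - lam * zx * wx)" .
  show ?thesis unfolding e3 e2 g by (simp add: algebra_simps)
qed

lemma alg_q:
  fixes \<kappa> ux w1 wx u1 V1 mx :: real
  assumes k: "\<kappa> > 0" and W: "ux * w1 - wx * (u1 + 2 / \<kappa> * (ux * V1)) = 0"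
  shows "(u1 * (mx * wx) - ux * ((- 2 * V1 / \<kappa>) * mx * wx + w1 * mx)) / ((mx * wx) * (mx * wx)) = 0"
proof -
  have "u1 * (mx * wx) - ux * ((- 2 * V1 / \<kappa>) * mx * wx + w1 * mx)
      = - mx * (ux * w1 - wx * (u1 + 2 / \<kappa> * (ux * V1)))" using k by (simp add: field_simps)
  then show ?thesis using W by simp
qed


theorem lemma9:
  fixes \<kappa> lam :: real and V \<theta> w z :: "real \<Rightarrow> real"
  assumes "\<kappa> > 0"
    and "smooth_on_unit V"
    and "smooth_on_unit \<theta>"
    and "\<forall>x\<in>{0<..<1}. \<theta> x > 0"
    and "\<theta> 0 = 0" and "\<theta> 1 = 0"
    and "\<exists>d. (\<theta> has_real_derivative d) (at 0 within {0..1}) \<and> d > 0"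
    and "\<exists>d. (\<theta> has_real_derivative d) (at 1 within {0..1}) \<and> d < 0"
    and "char_triple \<kappa> V \<theta> lam w z"
  shows "\<exists>C. ((\<lambda>x. (w x)^2 * exp (- 2 * V x / \<kappa>) / \<theta> x) has_integral C) {0..1} \<and> C > 0 \<and>
           (\<forall>x\<in>{0<..<1}. w x * z x = (1 / C) * ((w x)^2 * exp (- 2 * V x / \<kappa>) / \<theta> x))"
proof -
  have k: "\<kappa> > 0" using assms(1) .
  have thpos: "\<And>x. x \<in> {0<..<1} \<Longrightarrow> \<theta> x > 0" using assms(4) by blast
  note ct = assms(9)[unfolded char_triple_def]
  have wc: "continuous_on {0..1} w" and w2: "twice_diff_open_unit w"
    and wpos: "\<forall>x\<in>{0<..<1}. w x > 0" and w0: "w 0 = 0"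
    and odew: "\<forall>x\<in>{0<..<1}.
        - (\<kappa> / 2) * \<theta> x * deriv (deriv w) x + \<theta> x * deriv V x * deriv w x = lam * w x"
    and u2: "twice_diff_open_unit (\<lambda>x. \<theta> x * z x)"
    and pdiff: "\<forall>x\<in>{0<..<1}. (\<lambda>y. \<theta> y * z y * deriv V y) differentiable at x"
    and zpos: "\<forall>x\<in>{0<..<1}. z x > 0"
    and odez: "\<forall>x\<in>{0<..<1}.
        - (\<kappa> / 2) * deriv (deriv (\<lambda>y. \<theta> y * z y)) x
        - deriv (\<lambda>y. \<theta> y * z y * deriv V y) x = lam * z x"
    and ulim: "((\<lambda>x. \<theta> x * z x) \<longlongrightarrow> 0) (at_right 0)"
    and wzint: "((\<lambda>x. w x * z x) has_integral 1) {0..1}"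
    using ct by auto
  obtain DV where DV0: "DV 0 = V"
    and DVd: "\<forall>n. \<forall>x\<in>{0..1}. (DV n has_real_derivative DV (Suc n) x) (at x within {0..1})"
    using assms(2) unfolding smooth_on_unit_def by blast
  have DV1: "\<forall>x\<in>{0..1}. (V has_real_derivative DV 1 x) (at x within {0..1})"
    using DVd DV0 by (metis One_nat_def)
  have Vd: "(V has_real_derivative deriv V x) (at x)" if x: "x \<in> {0<..<1}" for x
  proof -
    have "(V has_real_derivative DV 1 x) (at x within {0..1})" using DV1 x by auto
    then have d1: "(V has_real_derivative DV 1 x) (at x)" using at_within_interior[of x "{0..1::real}"] x by simp
    then have "deriv V x = DV 1 x" by (rule DERIV_imp_deriv)
    then show ?thesis using d1 by simp
  qed
  have Vc: "continuous_on {0..1} V" using DV1 by (intro DERIV_continuous_on[where D="DV 1"]) auto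
  define m where "m = (\<lambda>x. exp (- 2 * V x / \<kappa>))"
  have mc: "continuous_on {0..1} m" unfolding m_def using Vc k by (intro continuous_intros) auto
  have mpos: "\<And>x. m x > 0" unfolding m_def by simp
  have mnz: "\<And>x. m x \<noteq> 0" using mpos by (metis less_irrefl)
  obtain xm where xm: "xm \<in> {0..1}" "\<forall>y\<in>{0..1}. m xm \<le> m y"
    using continuous_attains_inf[OF compact_Icc _ mc] by auto
  obtain xM where xM: "xM \<in> {0..1}" "\<forall>y\<in>{0..1}. m y \<le> m xM"
    using continuous_attains_sup[OF compact_Icc _ mc] by auto
  define \<mu> where "\<mu> = m xm"
  define M where "M = m xM"
  have mu0: "\<mu> > 0" unfolding \<mu>_def by (rule mpos)
  have M0: "M \<ge> 0" unfolding M_def using mpos less_imp_le by blast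
  have mlow: "\<And>y. y \<in> {0..1} \<Longrightarrow> \<mu> \<le> m y" using xm unfolding \<mu>_def by blast
  have mup: "\<And>y. y \<in> {0..1} \<Longrightarrow> m y \<le> M" using xM unfolding M_def by blast
  have md: "(m has_real_derivative (- 2 * deriv V x / \<kappa>) * m x) (at x)" if x: "x \<in> {0<..<1}" for x
    unfolding m_def using Vd[OF x] k by (auto intro!: derivative_eq_intros simp: field_simps)

  obtain d where d: "(\<theta> has_real_derivative d) (at 0 within {0..1})" "d > 0" using assms(7) by blast
  have "((\<lambda>y. (\<theta> y - \<theta> 0) / (y - 0)) \<longlongrightarrow> d) (at 0 within {0..1})"
    using d(1) has_field_derivative_iff by blast
  then have "eventually (\<lambda>y. d / 2 < (\<theta> y - \<theta> 0) / (y - 0)) (at 0 within {0..1})"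
    using d(2) by (intro order_tendstoD(1)) auto
  then obtain e where e: "e > 0" "\<forall>y\<in>{0..1}. y \<noteq> 0 \<and> dist y 0 < e \<longrightarrow> d / 2 < (\<theta> y - \<theta> 0) / (y - 0)"
    unfolding eventually_at by blast
  define b where "b = min (e / 2) (1 / 2)"
  have b: "0 < b" "b < 1" unfolding b_def using e(1) by auto
  define c0 where "c0 = d / 2"
  have c0: "c0 > 0" unfolding c0_def using d(2) by simp
  have thlow: "\<theta> x \<ge> c0 * x" if x: "x \<in> {0<..b}" for x
  proof -
    have "d / 2 < (\<theta> x - \<theta> 0) / (x - 0)" using e(2) x e(1) unfolding b_def by (auto simp: dist_real_def)
    then have "d / 2 < \<theta> x / x" using assms(5) by simp
    then show ?thesis using x unfolding c0_def by (simp add: field_simps)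
  qed
  define u where "u = (\<lambda>x. \<theta> x * z x)"
  define p where "p = (\<lambda>y. \<theta> y * z y * deriv V y)"
  have wd1: "(w has_real_derivative deriv w x) (at x)"
    and wd2: "(deriv w has_real_derivative deriv (deriv w) x) (at x)" if x: "x \<in> {0<..<1}" for x
    using w2 x unfolding twice_diff_open_unit_def DERIV_deriv_iff_real_differentiable by auto
  have ud1: "(u has_real_derivative deriv u x) (at x)"
    and ud2: "(deriv u has_real_derivative deriv (deriv u) x) (at x)" if x: "x \<in> {0<..<1}" for x
    using u2 x unfolding twice_diff_open_unit_def DERIV_deriv_iff_real_differentiable u_def by auto
  have pd: "(p has_real_derivative deriv p x) (at x)" if x: "x \<in> {0<..<1}" for x
    using pdiff x unfolding DERIV_deriv_iff_real_differentiable p_def by auto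
  have odew': "- (\<kappa> / 2) * \<theta> x * deriv (deriv w) x + \<theta> x * deriv V x * deriv w x = lam * w x"
    if x: "x \<in> {0<..<1}" for x using odew x by blast
  have odez': "- (\<kappa> / 2) * deriv (deriv u) x - deriv p x = lam * z x"
    if x: "x \<in> {0<..<1}" for x using odez x unfolding u_def p_def by blast
  have pu: "\<And>y. p y = u y * deriv V y" unfolding p_def u_def by simp
  define \<phi> where "\<phi> = (\<lambda>y. m y * deriv w y)"
  define gv where "gv = (\<lambda>y. deriv u y + 2 / \<kappa> * p y)"
  have \<phi>d: "(\<phi> has_real_derivative (- 2 * deriv V x / \<kappa>) * m x * deriv w x + deriv (deriv w) x * m x) (at x)"
    if x: "x \<in> {0<..<1}" for x
    unfolding \<phi>_def using DERIV_mult[OF md[OF x] wd2[OF x]] .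
  have gvd: "(gv has_real_derivative deriv (deriv u) x + 2 / \<kappa> * deriv p x) (at x)"
    if x: "x \<in> {0<..<1}" for x
    unfolding gv_def using DERIV_add[OF ud2[OF x] DERIV_cmult[OF pd[OF x]]] .
  have bx: "\<And>x. x \<in> {0<..b} \<Longrightarrow> x \<in> {0<..<1}" using b by auto
  have bx': "\<And>x. x \<in> {0<..b} \<Longrightarrow> x \<in> {0..1}" using b by auto
  have "\<exists>B. \<forall>x\<in>{0<..b}. \<bar>\<phi> x\<bar> \<le> B"
  proof (rule bound_lemma[where f=w and m=m and b=b and K="\<bar>2 * lam / \<kappa>\<bar> * M / c0" and \<mu>=\<mu>])
    show "0 < b" "b \<le> 1" using b by auto
    show "0 \<le> \<bar>2 * lam / \<kappa>\<bar> * M / c0" using M0 c0 by simp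
    show "0 < \<mu>" by (rule mu0)
    show "continuous_on {0..b} w" using b by (intro continuous_on_subset[OF wc]) auto
    show "w 0 = 0" by (rule w0)
    fix x assume x: "x \<in> {0<..b}"
    show "\<mu> \<le> m x" using mlow bx'[OF x] by blast
    show "(w has_real_derivative \<phi> x / m x) (at x)"
      using wd1[OF bx[OF x]] mnz[of x] unfolding \<phi>_def by simp
    have "\<bar>(- 2 * deriv V x / \<kappa>) * m x * deriv w x + deriv (deriv w) x * m x\<bar>
        \<le> (\<bar>2 * lam / \<kappa>\<bar> * M / c0) * \<bar>w x\<bar> / x"
    proof (rule gd_helper)
      show "c0 > 0" by (rule c0)
      show "x > 0" using x by simp
      show "\<theta> x \<ge> c0 * x" by (rule thlow[OF x])
      show "((- 2 * deriv V x / \<kappa>) * m x * deriv w x + deriv (deriv w) x * m x) * \<theta> x = - (2 * lam / \<kappa>) * m x * w x"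
        by (rule alg_w[OF k odew'[OF bx[OF x]]])
      show "0 \<le> m x" using mpos less_imp_le by blast
      show "m x \<le> M" using mup bx'[OF x] by blast
    qed
    then show "\<exists>D. (\<phi> has_real_derivative D) (at x) \<and> \<bar>D\<bar> \<le> \<bar>2 * lam / \<kappa>\<bar> * M / c0 * \<bar>w x\<bar> / x"
      using \<phi>d[OF bx[OF x]] by blast
  qed
  then obtain B1 where B1: "\<And>x. x \<in> {0<..b} \<Longrightarrow> \<bar>\<phi> x\<bar> \<le> B1" by blast
  define v where "v = (\<lambda>y. u y / m y)"
  have u0: "u 0 = 0" unfolding u_def using assms(5) by simp
  have uc: "continuous_on {0..b} u"
    unfolding continuous_on_eq_continuous_within
  proof
    fix x assume x: "x \<in> {0..b}"
    show "continuous (at x within {0..b}) u"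
    proof (cases "x = 0")
      case True
      have "(u \<longlongrightarrow> u 0) (at 0 within {0..b})"
        using ulim assms(5) at_within_Icc_at_right[OF b(1)] unfolding u_def by simp
      then show ?thesis using True by (simp add: continuous_within)
    next
      case False
      then have "x \<in> {0<..<1}" using x b by auto
      then have "continuous (at x) u" using ud1 DERIV_continuous by blast
      then show ?thesis by (rule continuous_at_imp_continuous_at_within)
    qed
  qed
  have "\<exists>B. \<forall>x\<in>{0<..b}. \<bar>gv x\<bar> \<le> B"
  proof (rule bound_lemma[where f=v and m=m and b=b and K="\<bar>2 * lam / \<kappa>\<bar> * M / c0" and \<mu>=\<mu>])
    show "0 < b" "b \<le> 1" using b by auto
    show "0 \<le> \<bar>2 * lam / \<kappa>\<bar> * M / c0" using M0 c0 by simp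
    show "0 < \<mu>" by (rule mu0)
    have "continuous_on {0..b} m" using b by (intro continuous_on_subset[OF mc]) auto
    then show "continuous_on {0..b} v" unfolding v_def using uc mnz by (intro continuous_intros) auto
    show "v 0 = 0" unfolding v_def using u0 by simp
    fix x assume x: "x \<in> {0<..b}"
    have x1: "x \<in> {0<..<1}" using bx[OF x] .
    show "\<mu> \<le> m x" using mlow bx'[OF x] by blast
    have "(v has_real_derivative (deriv u x * m x - u x * ((- 2 * deriv V x / \<kappa>) * m x)) / (m x * m x)) (at x)"
      unfolding v_def using DERIV_divide[OF ud1[OF x1] md[OF x1] mnz[of x]] .
    moreover have "(deriv u x * m x - u x * ((- 2 * deriv V x / \<kappa>) * m x)) / (m x * m x) = gv x / m x"
      unfolding gv_def pu using mnz[of x] k by (simp add: field_simps)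
    ultimately show "(v has_real_derivative gv x / m x) (at x)" by simp
    have "\<bar>deriv (deriv u) x + 2 / \<kappa> * deriv p x\<bar> \<le> (\<bar>2 * lam / \<kappa>\<bar> * M / c0) * \<bar>v x\<bar> / x"
    proof (rule gd_helper)
      show "c0 > 0" by (rule c0)
      show "x > 0" using x by simp
      show "\<theta> x \<ge> c0 * x" by (rule thlow[OF x])
      show "(deriv (deriv u) x + 2 / \<kappa> * deriv p x) * \<theta> x = - (2 * lam / \<kappa>) * m x * v x"
        by (rule alg_v[OF k odez'[OF x1]]) (auto simp: u_def v_def mnz)
      show "0 \<le> m x" using mpos less_imp_le by blast
      show "m x \<le> M" using mup bx'[OF x] by blast
    qed
    then show "\<exists>D. (gv has_real_derivative D) (at x) \<and> \<bar>D\<bar> \<le> \<bar>2 * lam / \<kappa>\<bar> * M / c0 * \<bar>v x\<bar> / x"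
      using gvd[OF x1] by blast
  qed
  then obtain B2 where B2: "\<And>x. x \<in> {0<..b} \<Longrightarrow> \<bar>gv x\<bar> \<le> B2" by blast

  define W where "W = (\<lambda>y. u y * deriv w y - w y * gv y)"
  have Wd: "(W has_real_derivative 0) (at x)" if x: "x \<in> {0<..<1}" for x
  proof -
    have "(W has_real_derivative (deriv u x * deriv w x + deriv (deriv w) x * u x)
        - (deriv w x * gv x + (deriv (deriv u) x + 2 / \<kappa> * deriv p x) * w x)) (at x)"
      unfolding W_def by (rule DERIV_diff[OF DERIV_mult[OF ud1[OF x] wd2[OF x]] DERIV_mult[OF wd1[OF x] gvd[OF x]]])
    moreover have "(deriv u x * deriv w x + deriv (deriv w) x * u x)
        - (deriv w x * gv x + (deriv (deriv u) x + 2 / \<kappa> * deriv p x) * w x) = 0"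
      by (rule alg_W[OF k odew'[OF x] odez'[OF x]]) (auto simp: u_def gv_def pu)
    ultimately show ?thesis by simp
  qed
  have Wconst: "W x = W y" if "x \<in> {0<..<1}" "y \<in> {0<..<1}" for x y
    using DERIV_isconst3[of 0 1 x y W] Wd that by auto
  have wlim: "(w \<longlongrightarrow> 0) (at_right 0)"
  proof -
    have "continuous (at 0 within {0..1}) w" using wc by (simp add: continuous_on_eq_continuous_within)
    then have "(w \<longlongrightarrow> w 0) (at 0 within {0..1})" by (simp add: continuous_within)
    then show ?thesis using w0 at_within_Icc_at_right[of "0::real" 1] by simp
  qed
  have ulim': "(u \<longlongrightarrow> 0) (at_right 0)" using ulim unfolding u_def .
  have evb: "eventually (\<lambda>y. y \<in> {0<..<b}) (at_right 0)" by (rule eventually_at_right_real[OF b(1)])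
  have Wlim: "(W \<longlongrightarrow> 0) (at_right 0)"
  proof (rule Lim_null_comparison)
    show "eventually (\<lambda>y. norm (W y) \<le> \<bar>u y\<bar> * (B1 / \<mu>) + \<bar>w y\<bar> * B2) (at_right 0)"
      using evb
    proof (rule eventually_mono)
      fix y assume y: "y \<in> {0<..<b}"
      then have yb: "y \<in> {0<..b}" by simp
      have "\<bar>deriv w y\<bar> = \<bar>\<phi> y\<bar> / m y" unfolding \<phi>_def using mpos[of y] mnz[of y] by (simp add: abs_mult)
      also have "\<dots> \<le> B1 / m y" using B1[OF yb] mpos[of y] by (intro divide_right_mono) auto
      also have "\<dots> \<le> B1 / \<mu>" using B1[OF yb] mlow[OF bx'[OF yb]] mu0 by (intro divide_left_mono) auto
      finally have dw: "\<bar>deriv w y\<bar> \<le> B1 / \<mu>" .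
      have "norm (W y) \<le> \<bar>u y\<bar> * \<bar>deriv w y\<bar> + \<bar>w y\<bar> * \<bar>gv y\<bar>"
        unfolding W_def real_norm_def using abs_triangle_ineq4[of "u y * deriv w y" "w y * gv y"] by (simp add: abs_mult)
      also have "\<dots> \<le> \<bar>u y\<bar> * (B1 / \<mu>) + \<bar>w y\<bar> * B2"
        using dw B2[OF yb] by (intro add_mono mult_left_mono) auto
      finally show "norm (W y) \<le> \<bar>u y\<bar> * (B1 / \<mu>) + \<bar>w y\<bar> * B2" .
    qed
    have "((\<lambda>y. \<bar>u y\<bar> * (B1 / \<mu>) + \<bar>w y\<bar> * B2) \<longlongrightarrow> \<bar>0\<bar> * (B1 / \<mu>) + \<bar>0\<bar> * B2) (at_right 0)"
      by (intro tendsto_intros ulim' wlim)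
    then show "((\<lambda>y. \<bar>u y\<bar> * (B1 / \<mu>) + \<bar>w y\<bar> * B2) \<longlongrightarrow> 0) (at_right 0)" by simp
  qed
  have W0: "W x = 0" if x: "x \<in> {0<..<1}" for x
  proof -
    have ev: "eventually (\<lambda>y. W y = W x) (at_right 0)"
      using evb by (rule eventually_mono) (use x b in \<open>auto intro!: Wconst\<close>)
    have "((\<lambda>y. W x) \<longlongrightarrow> 0) (at_right (0::real))" using Lim_transform_eventually[OF Wlim ev] .
    then show ?thesis using tendsto_const_iff[of "at_right (0::real)" "W x" 0] by simp
  qed
  define q where "q = (\<lambda>y. u y / (m y * w y))"
  have wnz: "\<And>x. x \<in> {0<..<1} \<Longrightarrow> w x \<noteq> 0" using wpos by (metis less_irrefl)
  have qd: "(q has_real_derivative 0) (at x)" if x: "x \<in> {0<..<1}" for x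
  proof -
    have nz: "m x * w x \<noteq> 0" using mnz[of x] wnz[OF x] by simp
    have "(q has_real_derivative (deriv u x * (m x * w x) - u x * ((- 2 * deriv V x / \<kappa>) * m x * w x + deriv w x * m x))
        / ((m x * w x) * (m x * w x))) (at x)"
      unfolding q_def by (rule DERIV_divide[OF ud1[OF x] DERIV_mult[OF md[OF x] wd1[OF x]] nz])
    moreover have "(deriv u x * (m x * w x) - u x * ((- 2 * deriv V x / \<kappa>) * m x * w x + deriv w x * m x))
        / ((m x * w x) * (m x * w x)) = 0"
      by (rule alg_q[OF k]) (use W0[OF x] in \<open>simp add: W_def gv_def pu\<close>)
    ultimately show ?thesis by (simp only:)
  qed
  define c where "c = q (1/2)"
  have h12: "(1/2::real) \<in> {0<..<1}" by simp
  have cpos: "c > 0"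
  proof -
    have "u (1/2) > 0" unfolding u_def using thpos[OF h12] zpos h12 by simp
    moreover have "m (1/2) * w (1/2) > 0" using mpos[of "1/2"] wpos h12 by simp
    ultimately show ?thesis unfolding c_def q_def by simp
  qed
  have qc: "q x = c" if x: "x \<in> {0<..<1}" for x
    unfolding c_def using DERIV_isconst3[of 0 1 x "1/2" q] qd x by auto
  have key: "w x * z x = c * ((w x)^2 * exp (- 2 * V x / \<kappa>) / \<theta> x)" if x: "x \<in> {0<..<1}" for x
  proof -
    have nz: "m x * w x \<noteq> 0" using mnz[of x] wnz[OF x] by simp
    have thx: "\<theta> x \<noteq> 0" using thpos[OF x] by (metis less_irrefl)
    have qx: "u x / (m x * w x) = c" using qc[OF x] unfolding q_def .
    have "u x = (u x / (m x * w x)) * (m x * w x)" using nz by simp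
    then have e1: "u x = c * (m x * w x)" unfolding qx .
    have "z x = u x / \<theta> x" unfolding u_def using thx by simp
    then have e2: "z x = c * (m x * w x) / \<theta> x" unfolding e1 .
    have "w x * z x = w x * (c * (m x * w x) / \<theta> x)" unfolding e2 ..
    also have "\<dots> = c * ((w x)^2 * m x / \<theta> x)" by (simp add: power2_eq_square)
    finally show ?thesis unfolding m_def .
  qed
  show ?thesis
  proof (intro exI conjI ballI)
    show "0 < 1 / c" using cpos by simp
    show "((\<lambda>x. (w x)^2 * exp (- 2 * V x / \<kappa>) / \<theta> x) has_integral (1 / c)) {0..1}"
    proof (rule has_integral_spike_finite[where S="{0,1}" and f="\<lambda>x. (1 / c) * (w x * z x)"])
      show "finite {0, 1::real}" by simp
      show "((\<lambda>x. (1 / c) * (w x * z x)) has_integral (1 / c)) {0..1}"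
        using has_integral_mult_right[OF wzint, of "1 / c"] by simp
      fix x :: real assume "x \<in> {0..1} - {0, 1}"
      then have x: "x \<in> {0<..<1}" by (auto simp: order_le_less)
      show "(w x)^2 * exp (- 2 * V x / \<kappa>) / \<theta> x = 1 / c * (w x * z x)"
        using key[OF x] cpos by simp
    qed
    fix x :: real assume x: "x \<in> {0<..<1}"
    show "w x * z x = 1 / (1 / c) * ((w x)^2 * exp (- 2 * V x / \<kappa>) / \<theta> x)"
      using key[OF x] by simp
  qed
qed
end
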